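(* Consider the DF-SSQP algorithm described in the context and suppose (A1) holds. For each $k$ decompose $\tilde\Delta x_k=u_k+v_k$ with $u_k\in\mathrm{Null}(\tilde G_k)$ and $v_k\in\mathrm{Range}(\tilde G_k^T)$. Then there exist constants $\kappa_v,\kappa_u,\kappa_q>0$ such that for all $k\ge0$: (a) $\max\{\|v_k\|,\|v_k\|^2\}\le\kappa_v\|c_k\|$; (b) if $\|u_k\|^2\ge\kappa_u\|v_k\|^2$, then $\tilde\Delta x_k^T\tilde B_k\tilde\Delta x_k\ge0.5\,\kappa_{1,\tilde B}\|u_k\|^2$; (c) $\Delta q(\tilde\Delta x_k;\tau_k,x_k,\bar g_k,\tilde B_k)\ge\kappa_q\tau_k(\|\tilde\Delta x_k\|^2+\|c_k\|)$.
   Context: Problem and notation. Let $\mathcal P$ be a probability distribution on a sample space, $F(\cdot;\xi):\mathbb R^d\to\mathbb R$ for each sample $\xi$, $f(x)=\mathbb E_{\xi\sim\mathcal P}[F(x;\xi)]$, and $c:\mathbb R^d\to\mathbb R^m$. The problem is $\min_{x\in\mathbb R^d} f(x)$ subject to $c(x)=0$. Let $G(x)=\nabla c(x)\in\mathbb R^{m\times d}$ denote the constraint Jacobian, $c^j$ the $j$-th component of $c$, and $\mathcal L(x,\lambda)=f(x)+\lambda^Tc(x)$ the Lagrangian. A subscript $k$ denotes evaluation at the iterate $x_k$: $f_k=f(x_k)$, $\nabla f_k=\nabla f(x_k)$, $c_k=c(x_k)$, $G_k=G(x_k)$. For a vector $v$ with nonzero entries, $v^j$ is its $j$-th entry, $v^{-1}$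 is the entrywise reciprocal and $v^{-T}=(v^{-1})^T$. Norms are Euclidean norms for vectors and operator norms for matrices. Algorithm (DF-SSQP). Inputs: $(x_0,\lambda_0)\in\mathbb R^d\times\mathbb R^m$, $\bar g_{-1}\in\mathbb R^d$, $\bar G_{-1}\in\mathbb R^{m\times d}$, $\bar B_{-1}=I$, $\tau_{-1},\nu_{-1}>0$; positive sequences $\{b_k\},\{\tilde b_k\},\{\alpha_k\},\{\beta_k\}$; parameters $\sigma,\epsilon\in(0,1)$, $\psi\ge0$, $p\ge1$; positive constants $\kappa_{\nabla f},\kappa_{\nabla c}$ (Lipschitz constants of $\nabla f$ and $\nabla c$); a distribution $\mathcal P_\Delta$ on $\mathbb R^d$. For $k=0,1,2,\dots$: (1) Draw $\xi_k\sim\mathcal P$ and two independent directions $\Delta_k,\tilde\Delta_k\sim\mathcal P_\Delta$. (2) Gradient estimates: $\hat\nabla F(x_k;\xi_k)=\frac{F(x_k+b_k\Delta_k;\xi_k)-F(x_k-b_k\Delta_k;\xi_k)}{2b_k}\Delta_k^{-1}$ and $\hat\nabla c(x_k)=\frac{c(x_k+b_k\Delta_k)-c(x_k-b_k\Delta_k)}{2b_k}\Delta_k^{-T}\in\mathbb R^{m\times d}$; averages $\bar g_k=(1-\beta_k)\bar g_{k-1}+\beta_k\hat\nabla F(x_k;\xi_k)$, $\bar G_k=(1-\beta_k)\bar G_{k-1}+\beta_k\hat\nabla c(x_k)$. (3) Hessian estimates: for each sign $\pm$, $\tilde\nabla F(x_k\pm b_k\Delta_k;\xi_k)=\frac{F(x_k\pm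 b_k\Delta_k+\tilde b_k\tilde\Delta_k;\xi_k)-F(x_k\pm b_k\Delta_k;\xi_k)}{\tilde b_k}\tilde\Delta_k^{-1}$ and $\tilde\nabla c(x_k\pm b_k\Delta_k)=\frac{c(x_k\pm b_k\Delta_k+\tilde b_k\tilde\Delta_k)-c(x_k\pm b_k\Delta_k)}{\tilde b_k}\tilde\Delta_k^{-T}$; $\tilde\nabla c^j$ is the transpose of the $j$-th row of $\tilde\nabla c$; $\delta\tilde\nabla F_k=\tilde\nabla F(x_k+b_k\Delta_k;\xi_k)-\tilde\nabla F(x_k-b_k\Delta_k;\xi_k)$, $\delta\tilde\nabla c^j_k=\tilde\nabla c^j(x_k+b_k\Delta_k)-\tilde\nabla c^j(x_k-b_k\Delta_k)$; $\hat\nabla^2F(x_k;\xi_k)=\frac12\big[\frac{\delta\tilde\nabla F_k}{2b_k}\Delta_k^{-T}+\Delta_k^{-1}\frac{(\delta\tilde\nabla F_k)^T}{2b_k}\big]$ and $\hat\nabla^2c^j_k=\frac12\big[\frac{\delta\tilde\nabla c^j_k}{2b_k}\Delta_k^{-T}+\Delta_k^{-1}\frac{(\delta\tilde\nabla c^j_k)^T}{2b_k}\big]$, $1\le j\le m$. (4) $\tilde G_k=\bar G_k+\delta_k^G$ with $\delta_k^G$ a perturbation making $\tilde G_k$ of full row rank; $\bar\nabla_x\mathcal L_k=\bar g_k+\tilde G_k^T\lambda_k$; $\hat\nabla_x^2\mathcal L_k=\hat\nabla^2F(x_k;\xi_k)+\sum_{j=1}^m\lambda_k^j\hat\nabla^2c^j_k$;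 $\bar B_k=(1-\beta_k)\bar B_{k-1}+\beta_k\hat\nabla_x^2\mathcal L_k$; $\tilde B_k=\bar B_k+\delta_k^B$ with $\delta_k^B$ a perturbation making $\tilde B_k$ positive definite on $\ker\tilde G_k$. (5) Solve $\tilde W_k\binom{\tilde\Delta x_k}{\tilde\Delta\lambda_k}=-\binom{\bar\nabla_x\mathcal L_k}{c_k}$, where $\tilde W_k=\begin{pmatrix}\tilde B_k&\tilde G_k^T\\ \tilde G_k&0\end{pmatrix}$. (6) With $\Delta q(d;\tau,x_k,\bar g_k,\tilde B_k)=-\tau(\bar g_k^Td+\tfrac12\max\{d^T\tilde B_kd,0\})+\|c_k\|$: let $s_k=\bar g_k^T\tilde\Delta x_k+\max\{\tilde\Delta x_k^T\tilde B_k\tilde\Delta x_k,0\}$; $\tau_k^{trial}=\infty$ if $s_k\le0$, else $\tau_k^{trial}=(1-\sigma)\|c_k\|/s_k$; $\tau_k=\tau_{k-1}$ if $\tau_{k-1}\le\tau_k^{trial}$, else $\tau_k=(1-\epsilon)\tau_k^{trial}$. Let $\nu_k^{trial}=\Delta q(\tilde\Delta x_k;\tau_k,x_k,\bar g_k,\tilde B_k)/\|\tilde\Delta x_k\|^2$; $\nu_k=\nu_{k-1}$ if $\nu_{k-1}\le\nu_k^{trial}$, else $\nu_k=(1-\epsilon)\nu_k^{trial}$. (7) Pick any (random) stepsize $\bar\alpha_k$ with $\frac{\nu_k\alpha_k}{\tau_k\kappa_{\nabla f}+\kappa_{\nabla c}}\le\bar\alpha_k\le\frac{\nu_k\alpha_k}{\tau_k\kappa_{\nabla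 f}+\kappa_{\nabla c}}+\psi\alpha_k^p$, and set $(x_{k+1},\lambda_{k+1})=(x_k,\lambda_k)+\bar\alpha_k(\tilde\Delta x_k,\tilde\Delta\lambda_k)$. Assumption (A1): There is an open convex set $\mathcal X\subseteq\mathbb R^d$ containing all points $x_k$, $x_k\pm b_k\Delta_k$, $x_k\pm b_k\Delta_k+\tilde b_k\tilde\Delta_k$; $f$ and $c$ are thrice differentiable with bounded first, second and third derivatives on $\mathcal X$; $f$ is bounded below on $\mathcal X$; there are constants $\kappa_c,\kappa_{1,G},\kappa_{2,G},\kappa_{1,\tilde G},\kappa_{2,\tilde G}>0$ with $\|c_k\|\le\kappa_c$, $\kappa_{1,G}I\preceq G_kG_k^T\preceq\kappa_{2,G}I$, $\kappa_{1,\tilde G}I\preceq\tilde G_k\tilde G_k^T\preceq\kappa_{2,\tilde G}I$ for all $k\ge0$; and constants $\kappa_{1,\tilde B},\kappa_{2,\tilde B}>0$ with $x^T\tilde B_kx\ge\kappa_{1,\tilde B}\|x\|^2$ for all $x$ with $\tilde G_kx=0$ and $\|\tilde B_k\|\le\kappa_{2,\tilde B}$. *)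

theory Defs
  imports "HOL-Analysis.Analysis"
begin

text \<open>Vectors in R^d are real^'d, matrices in R^(m x d) are real^'d^'m (m rows).\<close>

definition inv_vec :: "real^'n \<Rightarrow> real^'n" where
  "inv_vec v = (\<chi> i. 1 / v $ i)"

definition outer :: "real^'n \<Rightarrow> real^'k \<Rightarrow> real^'k^'n" where
  "outer a b = (\<chi> i j. a $ i * b $ j)"

definition spsa_grad :: "(real^'d \<Rightarrow> real) \<Rightarrow> real^'d \<Rightarrow> real \<Rightarrow> real^'d \<Rightarrow> real^'d" where
  "spsa_grad \<phi> y h D = ((\<phi> (y + h *\<^sub>R D) - \<phi> (y - h *\<^sub>R D)) / (2 * h)) *\<^sub>R inv_vec D"

definition fwd_grad :: "(real^'d \<Rightarrow> real) \<Rightarrow> real^'d \<Rightarrow> real \<Rightarrow> real^'d \<Rightarrow> real^'d" where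
  "fwd_grad \<phi> y h D = ((\<phi> (y + h *\<^sub>R D) - \<phi> y) / h) *\<^sub>R inv_vec D"

definition hess_est :: "(real^'d \<Rightarrow> real) \<Rightarrow> real^'d \<Rightarrow> real \<Rightarrow> real^'d \<Rightarrow> real \<Rightarrow> real^'d \<Rightarrow> real^'d^'d" where
  "hess_est \<phi> y h D h' D' =
     (let \<delta> = fwd_grad \<phi> (y + h *\<^sub>R D) h' D' - fwd_grad \<phi> (y - h *\<^sub>R D) h' D'
      in (1/2) *\<^sub>R (outer ((1 / (2 * h)) *\<^sub>R \<delta>) (inv_vec D) + outer (inv_vec D) ((1 / (2 * h)) *\<^sub>R \<delta>)))"

text \<open>Model reduction Delta q(d; tau, x_k, g, B) (step (6)); cx stands for c(x_k).\<close>
definition dq :: "real^'d \<Rightarrow> real \<Rightarrow> real^'m \<Rightarrow> real^'d \<Rightarrow> real^'d^'d \<Rightarrow> real" where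
  "dq d \<tau> cx g B = - \<tau> * (g \<bullet> d + (1/2) * max (d \<bullet> (B *v d)) 0) + norm cx"

text \<open>One realization of the DF-SSQP iteration (steps (1)-(7)); the "-1" quantities
  are g0, G0, tau0, nu0 (and Bbar_{-1} = I).  Perturbations delta^G, delta^B are arbitrary,
  so Gt, Bt are arbitrary subject to the stated rank / definiteness requirements.\<close>
definition dfssqp_run ::
  "(real^'d \<Rightarrow> 's \<Rightarrow> real) \<Rightarrow> (real^'d \<Rightarrow> real^'m) \<Rightarrow>
   (nat \<Rightarrow> 's) \<Rightarrow> (nat \<Rightarrow> real^'d) \<Rightarrow> (nat \<Rightarrow> real^'d) \<Rightarrow>
   (nat \<Rightarrow> real) \<Rightarrow> (nat \<Rightarrow> real) \<Rightarrow> (nat \<Rightarrow> real) \<Rightarrow> (nat \<Rightarrow> real) \<Rightarrow>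
   real \<Rightarrow> real \<Rightarrow> real \<Rightarrow> real \<Rightarrow> real \<Rightarrow> real \<Rightarrow> real^'d \<Rightarrow> real^'d^'m \<Rightarrow> real \<Rightarrow> real \<Rightarrow>
   (nat \<Rightarrow> real^'d) \<Rightarrow> (nat \<Rightarrow> real^'m) \<Rightarrow>
   (nat \<Rightarrow> real^'d) \<Rightarrow> (nat \<Rightarrow> real^'d^'m) \<Rightarrow> (nat \<Rightarrow> real^'d^'d) \<Rightarrow>
   (nat \<Rightarrow> real^'d^'m) \<Rightarrow> (nat \<Rightarrow> real^'d^'d) \<Rightarrow>
   (nat \<Rightarrow> real^'d) \<Rightarrow> (nat \<Rightarrow> real^'m) \<Rightarrow>
   (nat \<Rightarrow> real) \<Rightarrow> (nat \<Rightarrow> real) \<Rightarrow> (nat \<Rightarrow> real) \<Rightarrow> bool" where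
  "dfssqp_run F c xi Dl Dt b bt alpha beta sgm eps psi p kf kc g0 G0 tau0 nu0
      x lam gbar Gbar Bbar Gt Bt dx dlam tau nu abar \<longleftrightarrow>
   (\<forall>k. b k > 0 \<and> bt k > 0 \<and> alpha k > 0 \<and> beta k > 0) \<and>
   (\<forall>k i. Dl k $ i \<noteq> 0 \<and> Dt k $ i \<noteq> 0) \<and>
   (\<forall>k. let gprev = (if k = 0 then g0 else gbar (k - 1));
            Gprev = (if k = 0 then G0 else Gbar (k - 1));
            Bprev = (if k = 0 then mat 1 else Bbar (k - 1));
            taup = (if k = 0 then tau0 else tau (k - 1));
            nup = (if k = 0 then nu0 else nu (k - 1));
            ghat = spsa_grad (\<lambda>y. F y (xi k)) (x k) (b k) (Dl k);
            Ghat = (\<chi> j. spsa_grad (\<lambda>y. c y $ j) (x k) (b k) (Dl k)) :: real^'d^'m;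
            HL = hess_est (\<lambda>y. F y (xi k)) (x k) (b k) (Dl k) (bt k) (Dt k)
                 + (\<Sum>j\<in>UNIV. lam k $ j *\<^sub>R hess_est (\<lambda>y. c y $ j) (x k) (b k) (Dl k) (bt k) (Dt k));
            s = gbar k \<bullet> dx k + max (dx k \<bullet> (Bt k *v dx k)) 0;
            nutr = dq (dx k) (tau k) (c (x k)) (gbar k) (Bt k) / (norm (dx k))\<^sup>2;
            lo = nu k * alpha k / (tau k * kf + kc)
        in gbar k = (1 - beta k) *\<^sub>R gprev + beta k *\<^sub>R ghat \<and>
           Gbar k = (1 - beta k) *\<^sub>R Gprev + beta k *\<^sub>R Ghat \<and>
           Bbar k = (1 - beta k) *\<^sub>R Bprev + beta k *\<^sub>R HL \<and>
           (\<forall>z. transpose (Gt k) *v z = 0 \<longrightarrow> z = 0) \<and>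
           (\<forall>z. Gt k *v z = 0 \<and> z \<noteq> 0 \<longrightarrow> z \<bullet> (Bt k *v z) > 0) \<and>
           Bt k *v dx k + transpose (Gt k) *v dlam k = - (gbar k + transpose (Gt k) *v lam k) \<and>
           Gt k *v dx k = - c (x k) \<and>
           tau k = (if s \<le> 0 \<or> taup \<le> (1 - sgm) * norm (c (x k)) / s then taup
                    else (1 - eps) * ((1 - sgm) * norm (c (x k)) / s)) \<and>
           nu k = (if nup \<le> nutr then nup else (1 - eps) * nutr) \<and>
           lo \<le> abar k \<and> abar k \<le> lo + psi * alpha k powr p \<and>
           x (Suc k) = x k + abar k *\<^sub>R dx k \<and>
           lam (Suc k) = lam k + abar k *\<^sub>R dlam k)"

text \<open>The parts of Assumption (A1) concerning the iterates (Gjac is the Jacobian of c).\<close>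
definition A1_bounds ::
  "(real^'d \<Rightarrow> real^'m) \<Rightarrow> (real^'d \<Rightarrow> real^'d^'m) \<Rightarrow> (real^'d) set \<Rightarrow>
   (nat \<Rightarrow> real^'d) \<Rightarrow> (nat \<Rightarrow> real^'d) \<Rightarrow> (nat \<Rightarrow> real) \<Rightarrow> (nat \<Rightarrow> real) \<Rightarrow>
   (nat \<Rightarrow> real^'d) \<Rightarrow> (nat \<Rightarrow> real^'d^'m) \<Rightarrow> (nat \<Rightarrow> real^'d^'d) \<Rightarrow>
   real \<Rightarrow> real \<Rightarrow> real \<Rightarrow> real \<Rightarrow> real \<Rightarrow> real \<Rightarrow> real \<Rightarrow> bool" where
  "A1_bounds c Gjac X Dl Dt b bt x Gt Bt kc k1G k2G k1Gt k2Gt k1B k2B \<longleftrightarrow>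
   open X \<and> convex X \<and>
   (\<forall>y\<in>X. (c has_derivative (\<lambda>h. Gjac y *v h)) (at y)) \<and>
   (\<forall>k. x k \<in> X \<and> x k + b k *\<^sub>R Dl k \<in> X \<and> x k - b k *\<^sub>R Dl k \<in> X \<and>
        x k + b k *\<^sub>R Dl k + bt k *\<^sub>R Dt k \<in> X \<and> x k - b k *\<^sub>R Dl k + bt k *\<^sub>R Dt k \<in> X) \<and>
   (\<forall>k. norm (c (x k)) \<le> kc) \<and>
   (\<forall>k z. k1G * (norm z)\<^sup>2 \<le> z \<bullet> ((Gjac (x k) ** transpose (Gjac (x k))) *v z) \<and>
          z \<bullet> ((Gjac (x k) ** transpose (Gjac (x k))) *v z) \<le> k2G * (norm z)\<^sup>2) \<and>
   (\<forall>k z. k1Gt * (norm z)\<^sup>2 \<le> z \<bullet> ((Gt k ** transpose (Gt k)) *v z) \<and>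
          z \<bullet> ((Gt k ** transpose (Gt k)) *v z) \<le> k2Gt * (norm z)\<^sup>2) \<and>
   (\<forall>k z. Gt k *v z = 0 \<longrightarrow> z \<bullet> (Bt k *v z) \<ge> k1B * (norm z)\<^sup>2) \<and>
   (\<forall>k. onorm (\<lambda>z. Bt k *v z) \<le> k2B)"

end

theory Submission
  imports Defs
begin

lemma inner_transpose: fixes A :: "real^'n^'m"
  shows "x \<bullet> (transpose A *v y) = (A *v x) \<bullet> y"
  unfolding inner_vec_def matrix_vector_mult_def transpose_def
  apply (simp add: sum_distrib_left sum_distrib_right)
  apply (subst sum.swap) apply (simp add: mult_ac)
  done

lemma Bbound: fixes B :: "real^'n^'n"
  assumes "onorm (\<lambda>z. B *v z) \<le> K"
  shows "\<bar>x \<bullet> (B *v y)\<bar> \<le> K * norm x * norm y"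
proof -
  have "\<bar>x \<bullet> (B *v y)\<bar> \<le> norm x * norm (B *v y)" by (rule Cauchy_Schwarz_ineq2)
  also have "norm (B *v y) \<le> onorm (\<lambda>z. B *v z) * norm y"
    using onorm[OF matrix_vector_mul_bounded_linear[of B]] by simp
  also have "\<dots> \<le> K * norm y" using assms by (simp add: mult_right_mono)
  finally have "\<bar>x \<bullet> (B *v y)\<bar> \<le> norm x * (K * norm y)"
    by (simp add: mult_left_mono)
  thus ?thesis by (simp add: mult_ac)
qed

lemma part_a:
  fixes G :: "real^'d^'m"
  assumes Gv: "G *v v = - cx" and vw: "v = transpose G *v w"
    and k1: "\<forall>z. k1Gt*(norm z)^2 \<le> z \<bullet> ((G ** transpose G) *v z)" and k1p: "k1Gt > 0"
  shows "norm v * sqrt k1Gt \<le> norm cx"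
proof -
  have e1: "(norm v)^2 = - (cx \<bullet> w)"
  proof -
    have "(norm v)^2 = v \<bullet> (transpose G *v w)" using vw by (simp add: power2_norm_eq_inner)
    also have "\<dots> = (G *v v) \<bullet> w" by (rule inner_transpose)
    finally show ?thesis using Gv by simp
  qed
  have e2: "w \<bullet> ((G ** transpose G) *v w) = (norm v)^2"
  proof -
    have "w \<bullet> ((G ** transpose G) *v w) = w \<bullet> (G *v (transpose G *v w))"
      by (simp only: matrix_vector_mul_assoc)
    also have "\<dots> = w \<bullet> (G *v v)" using vw by simp
    also have "\<dots> = (G *v v) \<bullet> w" by (simp add: inner_commute)
    also have "\<dots> = v \<bullet> (transpose G *v w)" by (rule inner_transpose[symmetric])
    also have "\<dots> = v \<bullet> v" using vw by simp
    finally show ?thesis by (simp add: power2_norm_eq_inner)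
  qed
  have h1: "(norm v)^2 \<le> norm cx * norm w"
    using e1 Cauchy_Schwarz_ineq2[of cx w] by linarith
  have h2: "k1Gt * (norm w)^2 \<le> (norm v)^2" using k1[rule_format, of w] e2 by simp
  have "k1Gt * (norm v)^2 \<le> (norm cx)^2"
  proof (cases "v = 0")
    case True then show ?thesis by simp
  next
    case False
    hence vp: "(norm v)^2 > 0" by simp
    have "((norm v)^2)^2 \<le> (norm cx * norm w)^2"
      using power_mono[OF h1, of 2] by simp
    hence "k1Gt * ((norm v)^2)^2 \<le> (norm cx)^2 * (k1Gt * (norm w)^2)"
      using k1p by (simp add: power_mult_distrib mult_ac)
    also have "\<dots> \<le> (norm cx)^2 * (norm v)^2" using h2 by (simp add: mult_left_mono)
    finally have "(k1Gt * (norm v)^2) * (norm v)^2 \<le> (norm cx)^2 * (norm v)^2"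
      by (simp add: power2_eq_square mult_ac)
    thus ?thesis using vp by simp
  qed
  hence "sqrt (k1Gt * (norm v)^2) \<le> sqrt ((norm cx)^2)" by (rule real_sqrt_le_mono)
  thus ?thesis using k1p by (simp add: real_sqrt_mult mult_ac)
qed

lemma part_b:
  fixes B :: "real^'d^'d"
  assumes uB: "k1B * (norm u)^2 \<le> u \<bullet> (B *v u)" and oB: "onorm (\<lambda>z. B *v z) \<le> k2B"
    and k1p: "k1B > 0" and k2p: "k2B > 0"
    and big: "(norm u)^2 \<ge> (8*k2B/k1B + 1)^2 * (norm v)^2"
  shows "(u+v) \<bullet> (B *v (u+v)) \<ge> 0.5 * k1B * (norm u)^2"
proof -
  define s where "s = 8*k2B/k1B + 1"
  define a where "a = norm u"
  define t where "t = norm v"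
  have s1: "s \<ge> 1" using k1p k2p by (simp add: s_def)
  have sk: "s * k1B = 8*k2B + k1B" using k1p by (simp add: s_def field_simps)
  have "(s*t)^2 \<le> a^2" using big by (simp add: s_def a_def t_def power_mult_distrib)
  hence st: "s*t \<le> a" using s1 by (simp add: a_def t_def abs_le_square_iff[symmetric]) 
  have t0: "t \<ge> 0" "a \<ge> 0" by (simp_all add: t_def a_def)
  have ta: "t \<le> a" using st s1 t0 by (smt (verit) mult_le_cancel_right1)
  have kt: "8*k2B*t \<le> k1B*a"
  proof -
    have "8*k2B*t \<le> (s*k1B)*t" using sk t0 k1p by (simp add: mult_right_mono)
    also have "\<dots> = k1B*(s*t)" by simp
    also have "\<dots> \<le> k1B*a" using st k1p by simp
    finally show ?thesis .
  qed
  have exp: "(u+v) \<bullet> (B *v (u+v)) = u \<bullet> (B *v u) + u \<bullet> (B *v v) + v \<bullet> (B *v u) + v \<bullet> (B *v v)"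
    by (simp add: matrix_vector_right_distrib inner_add_left inner_add_right)
  have b1: "u \<bullet> (B *v v) \<ge> - (k2B*a*t)" using Bbound[OF oB, of u v] by (simp add: a_def t_def)
  have b2: "v \<bullet> (B *v u) \<ge> - (k2B*a*t)" using Bbound[OF oB, of v u] by (simp add: a_def t_def mult_ac)
  have b3: "v \<bullet> (B *v v) \<ge> - (k2B*t*t)" using Bbound[OF oB, of v v] by (simp add: t_def)
  have c1: "8*(k2B*a*t) \<le> k1B*a*a" using mult_right_mono[OF kt t0(2)] by (simp add: mult_ac)
  have c2: "8*(k2B*t*t) \<le> k1B*a*a"
  proof -
    have "8*(k2B*t*t) \<le> k1B*a*t" using mult_right_mono[OF kt t0(1)] by (simp add: mult_ac)
    also have "\<dots> \<le> k1B*a*a" using ta k1p t0 by (simp add: mult_left_mono)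
    finally show ?thesis .
  qed
  have P0: "0 \<le> k1B*a*a" using k1p t0 by simp
  have uB': "k1B*a*a \<le> u \<bullet> (B *v u)" using uB by (simp add: a_def power2_eq_square mult.assoc)
  have "(u+v) \<bullet> (B *v (u+v)) \<ge> 0.5 * (k1B*a*a)" using exp b1 b2 b3 c1 c2 uB' P0 by linarith
  thus ?thesis by (simp add: a_def power2_eq_square mult.assoc)
qed
lemma part_c:
  fixes d u v g :: "real^'d" and B :: "real^'d^'d" and cx :: "real^'m"
  assumes dd: "d = u+v" and ort: "u \<bullet> v = 0"
    and t0: "0 \<le> \<tau>" "\<tau> \<le> \<tau>0" "\<tau>0 > 0" and sg: "0 < \<sigma>" "\<sigma> < 1"
    and ts: "g \<bullet> d + max (d \<bullet> (B *v d)) 0 > 0 \<longrightarrow> \<tau> * (g \<bullet> d + max (d \<bullet> (B *v d)) 0) \<le> (1-\<sigma>) * norm cx"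
    and pb: "(norm u)^2 \<ge> ku*(norm v)^2 \<longrightarrow> d \<bullet> (B *v d) \<ge> 0.5*k1B*(norm u)^2"
    and pa: "(norm v)^2 \<le> kv * norm cx" and ku: "ku \<ge> 1" and kv: "kv > 0" and k1: "k1B > 0"
  shows "dq d \<tau> cx g B \<ge> min (k1B/8) (\<sigma>/(\<tau>0*((ku+1)*kv+1))) * \<tau> * ((norm d)^2 + norm cx)"
proof -
  define M where "M = max (d \<bullet> (B *v d)) 0"
  define S where "S = g \<bullet> d + M"
  define c where "c = norm cx"
  define a2 where "a2 = (norm u)^2"
  define v2 where "v2 = (norm v)^2"
  define n2 where "n2 = (norm d)^2"
  define K where "K = (ku+1)*kv+1"
  define kq where "kq = min (k1B/8) (\<sigma>/(\<tau>0*K))"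
  have c0: "c \<ge> 0" by (simp add: c_def)
  have M0: "M \<ge> 0" by (simp add: M_def)
  have a0: "a2 \<ge> 0" "v2 \<ge> 0" by (simp_all add: a2_def v2_def)
  have K1: "K \<ge> 1" using ku kv by (simp add: K_def)
  have nd: "n2 = a2 + v2" unfolding n2_def a2_def v2_def dd using ort
    by (simp add: power2_norm_eq_inner inner_add_left inner_add_right inner_commute)
  have dqe: "dq d \<tau> cx g B = - \<tau> * S + \<tau> * M / 2 + c"
    unfolding dq_def S_def M_def c_def by (simp add: algebra_simps)
  have h: "dq d \<tau> cx g B \<ge> \<sigma> * c + \<tau> * M / 2"
  proof (cases "S > 0")
    case True
    hence "\<tau> * S \<le> (1-\<sigma>) * c" using ts by (simp add: S_def M_def c_def)
    thus ?thesis using dqe by (simp add: algebra_simps)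
  next
    case False
    hence "\<tau> * S \<le> 0" using t0 by (simp add: mult_nonneg_nonpos)
    moreover have "\<sigma> * c \<le> 1 * c" using sg c0 by (intro mult_right_mono) auto
    ultimately show ?thesis using dqe by linarith
  qed
  have kq0: "kq \<ge> 0" using k1 sg t0 K1 by (simp add: kq_def)
  have kqa: "kq \<le> k1B/8" unfolding kq_def by (rule min.cobounded1)
  have kqb: "kq * (\<tau>0 * K) \<le> \<sigma>"
  proof -
    have "kq \<le> \<sigma>/(\<tau>0*K)" unfolding kq_def by (rule min.cobounded2)
    moreover have "\<tau>0*K > 0" using t0 K1 by simp
    ultimately show ?thesis by (simp add: pos_le_divide_eq)
  qed
  have kqc: "kq * \<tau> \<le> \<sigma>"
  proof -
    have "kq * \<tau> \<le> kq * (\<tau>0 * K)"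
    proof (rule mult_left_mono[OF _ kq0])
      have "\<tau>0 * 1 \<le> \<tau>0 * K" using K1 t0 by (intro mult_left_mono) auto
      thus "\<tau> \<le> \<tau>0 * K" using t0 by linarith
    qed
    thus ?thesis using kqb by simp
  qed
  have "kq * \<tau> * (n2 + c) \<le> \<sigma> * c + \<tau> * M / 2"
  proof (cases "a2 \<ge> ku * v2")
    case True
    hence M1: "M \<ge> 0.5*k1B*a2" using pb by (simp add: a2_def v2_def M_def)
    have "v2 \<le> ku * v2" using ku a0 by (simp add: mult_le_cancel_right1)
    hence n2a: "n2 \<le> 2*a2" using True nd by simp
    have "kq * \<tau> * n2 \<le> (k1B/8) * \<tau> * (2*a2)"
    proof (rule mult_mono)
      show "kq * \<tau> \<le> k1B / 8 * \<tau>" using kqa t0 by (intro mult_right_mono) auto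
      show "0 \<le> k1B / 8 * \<tau>" using k1 t0 by simp
      show "0 \<le> n2" by (simp add: n2_def)
    qed (rule n2a)
    also have "\<dots> = \<tau> * (0.5*k1B*a2) / 2" by simp
    also have "\<dots> \<le> \<tau> * M / 2"
    proof -
      have "\<tau> * (0.5*k1B*a2) \<le> \<tau> * M" using M1 t0 by (intro mult_left_mono) auto
      thus ?thesis by (simp only: divide_right_mono)
    qed
    finally have e1: "kq * \<tau> * n2 \<le> \<tau> * M / 2" .
    have e2: "kq * \<tau> * c \<le> \<sigma> * c" using kqc c0 by (simp add: mult_right_mono)
    show ?thesis using e1 e2 by (simp add: algebra_simps)
  next
    case False
    have "n2 \<le> (ku+1) * v2" using False nd by (simp add: algebra_simps)
    also have "\<dots> \<le> (ku+1)*(kv*c)" using pa ku by (simp add: v2_def c_def)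
    finally have "n2 + c \<le> K * c" by (simp add: K_def algebra_simps)
    hence "kq * \<tau> * (n2 + c) \<le> kq * \<tau> * (K * c)" using kq0 t0 by (simp add: mult_left_mono)
    also have "\<dots> = (kq * (\<tau>0 * K)) * (\<tau> * c) / \<tau>0" using t0 by simp
    also have "\<dots> \<le> \<sigma> * (\<tau> * c) / \<tau>0" 
    proof -
      have "(kq * (\<tau>0 * K)) * (\<tau> * c) \<le> \<sigma> * (\<tau> * c)" using kqb t0 c0 by (intro mult_right_mono) auto
      thus ?thesis using t0 by (intro divide_right_mono) auto
    qed
    also have "\<dots> \<le> \<sigma> * c"
    proof -
      have "\<tau> * c \<le> \<tau>0 * c" using t0 c0 by (simp add: mult_right_mono)
      hence "\<sigma> * (\<tau> * c) \<le> \<sigma> * (\<tau>0 * c)" using sg by simp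
      thus ?thesis using t0 by (simp add: divide_le_eq mult_ac)
    qed
    finally have "kq * \<tau> * (n2 + c) \<le> \<sigma> * c" .
    moreover have "\<tau> * M \<ge> 0" using t0 M0 by simp
    ultimately show ?thesis by linarith
  qed
  thus ?thesis using h by (simp add: kq_def K_def n2_def c_def)
qed

lemma tau_step:
  fixes tk tp s A eps :: real
  assumes tk: "tk = (if s \<le> 0 \<or> tp \<le> A / s then tp else (1-eps) * (A / s))"
    and A: "A \<ge> 0" and tp: "tp \<ge> 0" and e: "0 < eps" "eps < 1"
  shows "0 \<le> tk" "tk \<le> tp" "s > 0 \<longrightarrow> tk * s \<le> A"
proof -
  show "0 \<le> tk"
  proof (cases "s \<le> 0 \<or> tp \<le> A / s")
    case True thus ?thesis using tk tp by simp
  next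
    case False thus ?thesis using tk A e by simp
  qed
  show "tk \<le> tp"
  proof (cases "s \<le> 0 \<or> tp \<le> A / s")
    case True thus ?thesis using tk tp by simp
  next
    case False
    have "(1-eps) * (A/s) \<le> 1 * (A/s)" using e A False by (intro mult_right_mono) auto
    thus ?thesis using tk False by simp
  qed
  show "s > 0 \<longrightarrow> tk * s \<le> A"
  proof
    assume sp: "s > 0"
    show "tk * s \<le> A"
    proof (cases "tp \<le> A / s")
      case True
      hence "tp * s \<le> A" using sp by (simp add: le_divide_eq)
      thus ?thesis using tk True by simp
    next
      case False
      have "(1-eps) * (A/s) \<le> 1 * (A/s)" using e A sp by (intro mult_right_mono) auto
      hence "(1-eps) * (A/s) * s \<le> (A/s) * s" using sp by (intro mult_right_mono) auto
      thus ?thesis using tk False sp by simp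
    qed
  qed
qed

lemma run_k:
  assumes "dfssqp_run F c xi Dl Dt b bt alpha beta sgm eps psi p kf kc g0 G0 tau0 nu0
                  x lam gbar Gbar Bbar Gt Bt dx dlam tau nu abar"
  shows "Gt k *v dx k = - c (x k)"
    "tau k = (if gbar k \<bullet> dx k + max (dx k \<bullet> (Bt k *v dx k)) 0 \<le> 0 \<or>
                 (if k = 0 then tau0 else tau (k - 1)) \<le> (1 - sgm) * norm (c (x k)) / (gbar k \<bullet> dx k + max (dx k \<bullet> (Bt k *v dx k)) 0)
              then (if k = 0 then tau0 else tau (k - 1))
              else (1 - eps) * ((1 - sgm) * norm (c (x k)) / (gbar k \<bullet> dx k + max (dx k \<bullet> (Bt k *v dx k)) 0)))"
proof -
  note H = assms[unfolded dfssqp_run_def, THEN conjunct2, THEN conjunct2, THEN spec[of _ k], unfolded Let_def]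
  show "Gt k *v dx k = - c (x k)" using H by blast
  show "tau k = (if gbar k \<bullet> dx k + max (dx k \<bullet> (Bt k *v dx k)) 0 \<le> 0 \<or>
                 (if k = 0 then tau0 else tau (k - 1)) \<le> (1 - sgm) * norm (c (x k)) / (gbar k \<bullet> dx k + max (dx k \<bullet> (Bt k *v dx k)) 0)
              then (if k = 0 then tau0 else tau (k - 1))
              else (1 - eps) * ((1 - sgm) * norm (c (x k)) / (gbar k \<bullet> dx k + max (dx k \<bullet> (Bt k *v dx k)) 0)))"
    using H by blast
qed

lemma run_tau:
  assumes R: "dfssqp_run F c xi Dl Dt b bt alpha beta sgm eps psi p kf kc g0 G0 tau0 nu0
                  x lam gbar Gbar Bbar Gt Bt dx dlam tau nu abar"
    and s1: "sgm < 1" and e: "0 < eps" "eps < 1" and t0: "tau0 > 0"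
  shows "0 \<le> tau k \<and> tau k \<le> tau0 \<and>
     (gbar k \<bullet> dx k + max (dx k \<bullet> (Bt k *v dx k)) 0 > 0 \<longrightarrow>
        tau k * (gbar k \<bullet> dx k + max (dx k \<bullet> (Bt k *v dx k)) 0) \<le> (1 - sgm) * norm (c (x k)))"
proof (induction k)
  case 0
  have st: "tau 0 = (if gbar 0 \<bullet> dx 0 + max (dx 0 \<bullet> (Bt 0 *v dx 0)) 0 \<le> 0 \<or>
                 tau0 \<le> (1 - sgm) * norm (c (x 0)) / (gbar 0 \<bullet> dx 0 + max (dx 0 \<bullet> (Bt 0 *v dx 0)) 0)
              then tau0
              else (1 - eps) * ((1 - sgm) * norm (c (x 0)) / (gbar 0 \<bullet> dx 0 + max (dx 0 \<bullet> (Bt 0 *v dx 0)) 0)))"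
    using run_k(2)[OF R, of 0] by simp
  have A: "(1 - sgm) * norm (c (x 0)) \<ge> 0" using s1 by simp
  show ?case using tau_step[OF st A _ e] t0 by simp
next
  case (Suc k)
  have st: "tau (Suc k) = (if gbar (Suc k) \<bullet> dx (Suc k) + max (dx (Suc k) \<bullet> (Bt (Suc k) *v dx (Suc k))) 0 \<le> 0 \<or>
                 tau k \<le> (1 - sgm) * norm (c (x (Suc k))) / (gbar (Suc k) \<bullet> dx (Suc k) + max (dx (Suc k) \<bullet> (Bt (Suc k) *v dx (Suc k))) 0)
              then tau k
              else (1 - eps) * ((1 - sgm) * norm (c (x (Suc k))) / (gbar (Suc k) \<bullet> dx (Suc k) + max (dx (Suc k) \<bullet> (Bt (Suc k) *v dx (Suc k))) 0)))"
    using run_k(2)[OF R, of "Suc k"] by simp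
  have A: "(1 - sgm) * norm (c (x (Suc k))) \<ge> 0" using s1 by simp
  have tk: "0 \<le> tau k" "tau k \<le> tau0" using Suc.IH by auto
  show ?case using tau_step[OF st A tk(1) e] tk by simp
qed

theorem lemma3p8:
  fixes sgm eps psi p kf kc tau0 nu0 kcb k1G k2G k1Gt k2Gt k1B k2B :: real
    and g0 :: "real^'d" and G0 :: "real^'d^'m"
  assumes "0 < sgm" "sgm < 1" "0 < eps" "eps < 1" "psi \<ge> 0" "p \<ge> 1"
    and "kf > 0" "kc > 0" "tau0 > 0" "nu0 > 0"
    and "kcb > 0" "k1G > 0" "k2G > 0" "k1Gt > 0" "k2Gt > 0" "k1B > 0" "k2B > 0"
  shows "\<exists>kv ku kq. kv > 0 \<and> ku > 0 \<and> kq > 0 \<and>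
    (\<forall>(F :: real^'d \<Rightarrow> 's \<Rightarrow> real) (c :: real^'d \<Rightarrow> real^'m) Gjac X xi Dl Dt b bt alpha beta
       x lam gbar Gbar Bbar Gt Bt dx dlam tau nu abar.
       dfssqp_run F c xi Dl Dt b bt alpha beta sgm eps psi p kf kc g0 G0 tau0 nu0
                  x lam gbar Gbar Bbar Gt Bt dx dlam tau nu abar \<and>
       A1_bounds c Gjac X Dl Dt b bt x Gt Bt kcb k1G k2G k1Gt k2Gt k1B k2B \<longrightarrow>
       (\<forall>k (u :: real^'d) v.
          dx k = u + v \<and> Gt k *v u = 0 \<and> v \<in> range (\<lambda>w. transpose (Gt k) *v w) \<longrightarrow>
          max (norm v) ((norm v)\<^sup>2) \<le> kv * norm (c (x k)) \<and>
          ((norm u)\<^sup>2 \<ge> ku * (norm v)\<^sup>2 \<longrightarrow> dx k \<bullet> (Bt k *v dx k) \<ge> 0.5 * k1B * (norm u)\<^sup>2) \<and>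
          dq (dx k) (tau k) (c (x k)) (gbar k) (Bt k) \<ge> kq * tau k * ((norm (dx k))\<^sup>2 + norm (c (x k)))))"
  proof -
  define kv where "kv = 1 / sqrt k1Gt + kcb / k1Gt"
  define ku where "ku = (8*k2B/k1B + 1)^2"
  define kq where "kq = min (k1B/8) (sgm/(tau0*((ku+1)*kv+1)))"
  have sq0: "sqrt k1Gt > 0" using assms by simp
  have kv0: "kv > 0" unfolding kv_def
    using assms sq0 by (intro add_pos_pos divide_pos_pos) auto
  have ku1: "ku \<ge> 1"
  proof -
    have "1 \<le> 8*k2B/k1B + 1" using assms by simp
    hence "1^2 \<le> (8*k2B/k1B + 1)^2" by (intro power_mono) auto
    thus ?thesis by (simp add: ku_def)
  qed
  have "(ku+1)*kv+1 > 0" using kv0 ku1 by (intro add_pos_pos mult_pos_pos) auto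
  hence "sgm/(tau0*((ku+1)*kv+1)) > 0" using assms by (intro divide_pos_pos mult_pos_pos) auto
  hence kq0: "kq > 0" using assms by (simp add: kq_def)
  have ku0: "ku > 0" using ku1 by simp
  show ?thesis
  proof (rule exI[of _ kv], rule exI[of _ ku], rule exI[of _ kq], intro conjI[OF kv0] conjI[OF ku0] conjI[OF kq0] allI impI conjI)
    fix F :: "real^'d \<Rightarrow> 's \<Rightarrow> real" and c :: "real^'d \<Rightarrow> real^'m" and Gjac X xi Dl Dt b bt alpha beta
       x lam gbar Gbar Bbar Gt Bt dx dlam tau nu abar k and u v :: "real^'d"
    assume H: "dfssqp_run F c xi Dl Dt b bt alpha beta sgm eps psi p kf kc g0 G0 tau0 nu0
                  x lam gbar Gbar Bbar Gt Bt dx dlam tau nu abar \<and>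
       A1_bounds c Gjac X Dl Dt b bt x Gt Bt kcb k1G k2G k1Gt k2Gt k1B k2B"
    and D: "dx k = u + v \<and> Gt k *v u = 0 \<and> v \<in> range (\<lambda>w. transpose (Gt k) *v w)"
    have R: "dfssqp_run F c xi Dl Dt b bt alpha beta sgm eps psi p kf kc g0 G0 tau0 nu0
                  x lam gbar Gbar Bbar Gt Bt dx dlam tau nu abar" using H by blast
    have A: "A1_bounds c Gjac X Dl Dt b bt x Gt Bt kcb k1G k2G k1Gt k2Gt k1B k2B" using H by blast
    have cb: "norm (c (x k)) \<le> kcb" using A unfolding A1_bounds_def by blast
    have k1: "\<forall>z. k1Gt*(norm z)^2 \<le> z \<bullet> ((Gt k ** transpose (Gt k)) *v z)"
      using A unfolding A1_bounds_def by blast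
    have uB: "k1B * (norm u)^2 \<le> u \<bullet> (Bt k *v u)" using A D unfolding A1_bounds_def by blast
    have oB: "onorm (\<lambda>z. Bt k *v z) \<le> k2B" using A unfolding A1_bounds_def by blast
    obtain w where vw: "v = transpose (Gt k) *v w" using D by blast
    have dxe: "dx k = u + v" using D by blast
    have Gu: "Gt k *v u = 0" using D by blast
    have Gv: "Gt k *v v = - c (x k)"
      using run_k(1)[OF R, of k] dxe Gu by (simp add: matrix_vector_right_distrib)
    have pa: "norm v * sqrt k1Gt \<le> norm (c (x k))" by (rule part_a[OF Gv vw k1]) (use assms in simp)
    have sq: "sqrt k1Gt > 0" using assms by simp
    have v1: "norm v \<le> norm (c (x k)) / sqrt k1Gt" using pa sq by (simp add: le_divide_eq)
    have v2: "(norm v)^2 \<le> kcb / k1Gt * norm (c (x k))"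
    proof -
      have "(norm v * sqrt k1Gt)^2 \<le> (norm (c (x k)))^2" using pa sq by (intro power_mono) auto
      hence "(norm v)^2 * k1Gt \<le> norm (c (x k)) * norm (c (x k))"
        using assms by (simp add: power_mult_distrib power2_eq_square[of "norm (c (x k))"])
      also have "\<dots> \<le> kcb * norm (c (x k))" using cb by (intro mult_right_mono) auto
      finally show ?thesis using assms by (simp add: le_divide_eq mult_ac)
    qed
    have v1': "norm v \<le> kv * norm (c (x k))"
    proof -
      have "kcb / k1Gt * norm (c (x k)) \<ge> 0" using assms by simp
      thus ?thesis using v1 by (simp add: kv_def algebra_simps)
    qed
    have v2': "(norm v)^2 \<le> kv * norm (c (x k))"
    proof -
      have "1 / sqrt k1Gt * norm (c (x k)) \<ge> 0" using assms by simp
      thus ?thesis using v2 by (simp add: kv_def algebra_simps)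
    qed
    show "max (norm v) ((norm v)\<^sup>2) \<le> kv * norm (c (x k))" using v1' v2' by simp
    have pb: "(norm u)^2 \<ge> ku * (norm v)^2 \<longrightarrow> dx k \<bullet> (Bt k *v dx k) \<ge> 0.5 * k1B * (norm u)^2"
      using part_b[OF uB oB] assms dxe by (simp add: ku_def)
    thus "(norm u)^2 \<ge> ku * (norm v)^2 \<Longrightarrow> dx k \<bullet> (Bt k *v dx k) \<ge> 0.5 * k1B * (norm u)^2" by blast
    have ort: "u \<bullet> v = 0" using vw Gu by (simp only: inner_transpose) simp
    have T: "0 \<le> tau k \<and> tau k \<le> tau0 \<and>
     (gbar k \<bullet> dx k + max (dx k \<bullet> (Bt k *v dx k)) 0 > 0 \<longrightarrow>
        tau k * (gbar k \<bullet> dx k + max (dx k \<bullet> (Bt k *v dx k)) 0) \<le> (1 - sgm) * norm (c (x k)))"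
      by (rule run_tau[OF R]) (use assms in auto)
    show "dq (dx k) (tau k) (c (x k)) (gbar k) (Bt k) \<ge> kq * tau k * ((norm (dx k))\<^sup>2 + norm (c (x k)))"
      unfolding kq_def
      by (rule part_c[OF dxe ort]) (use T assms pb v2' ku1 kv0 in auto)
  qed
qed

end
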